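(* Let $\mathcal{D}$ be a distribution on $\mathbb{R}^d\times\mathbb{R}$, let $\mathbb{W}$ be a parameter space, and let $\ell:(\mathbb{R}^d\times\mathbb{R})\times\mathbb{W}\to\mathbb{R}^+$ be a loss function with $L:=\sup_{z}\sup_{w\in\mathbb{W}}|\ell(z,w)|<\infty$. For a training set $S=\{z_1,\dots,z_n\}$ drawn i.i.d. from $\mathcal{D}$, let $\phi_S$ be the (stochastic) gradient descent update $w_{t+1}=\phi_S(w_t)=w_t-\frac{\eta}{m}\sum_{i\in\Xi_t}\nabla\ell(z_i,w_t)$, where the step size $\eta>0$ is fixed and $\Xi_t$ is a uniformly random subset of $\{1,\dots,n\}$ of size $m$ ($m=n$ for gradient descent, in which case $\Xi_t=\{1,\dots,n\}$). Assume the ergodicity assumption: for every $S$ there is a map $z\mapsto\langle\ell_z\rangle_S\in\mathbb{R}$ such that for Lebesgue-a.e. $w_0$ and every $z\in\mathbb{R}^d\times\mathbb{R}$, $\lim_{T\to\infty}\frac1T\sum_{t=0}^{T-1}\ell(z,w_t)=\langle\ell_z\rangle_S$ along the orbit $w_t=\phi_S(w_{t-1})$. Suppose the algorithm is $\beta$-statistically algorithmically stable, i.e. $\beta=\sup\{|\langle\ell_z\rangle_S-\langle\ell_z\rangle_{S'}|: z\in\mathbb{R}^d\times\mathbb{R}\}$ for all training sets $S,S'$ sampled from $\mathcal{D}$ that differ in exactly one point. Define $\hat R_S=\frac1n\sum_{z\in S}\langle\ell_z\rangle_S$ and $R_S=\mathbb{E}_{z\sim\mathcal{D}}\langle\ell_z\rangle_S$.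 Then for any $\delta\in(0,1)$, with probability greater than $1-\delta$ over $S\sim\mathcal{D}^n$, $$R_S\le \hat R_S+\beta+2(n\beta+L)\sqrt{\frac{\log(2/\delta)}{2n}}.$$
   Context: $\langle\ell_z\rangle_S$ is the long-time average ("loss statistic") of the loss at the point $z$ along almost every training orbit for training set $S$. $\hat R_S$ and $R_S$ are the empirical and population risks defined via these loss statistics. Statistical algorithmic stability (SAS) with coefficient $\beta$ is as defined in the claim; the two training sets $S,S'$ differ by replacing one element with another drawn from $\mathcal{D}$. *)

theory Defs
  imports "HOL-Probability.Probability"
begin

text \<open>Training set S is indexed by 0..n-1,
  xi t is the mini-batch index set used at step t, g is the gradient of the loss
  in the parameter, eta the step size and m the batch size.\<close>
fun sgd_orbit :: "('z \<Rightarrow> 'w::real_vector \<Rightarrow> 'w) \<Rightarrow> real \<Rightarrow> nat \<Rightarrow> (nat \<Rightarrow> 'z)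
                   \<Rightarrow> (nat \<Rightarrow> nat set) \<Rightarrow> 'w \<Rightarrow> nat \<Rightarrow> 'w" where
  "sgd_orbit g eta m S xi w0 0 = w0"
| "sgd_orbit g eta m S xi w0 (Suc t) =
     (let w = sgd_orbit g eta m S xi w0 t in
        w - (eta / real m) *\<^sub>R (\<Sum>i\<in>xi t. g (S i) w))"

text \<open>Law of the sequence of mini-batches: i.i.d. uniformly random subsets of
  {0..n-1} of size m (for m = n this is the constant full batch).\<close>
definition batch_law :: "nat \<Rightarrow> nat \<Rightarrow> (nat \<Rightarrow> nat set) measure" where
  "batch_law n m = PiM UNIV (\<lambda>_. measure_pmf (pmf_of_set {A. A \<subseteq> {..<n} \<and> card A = m}))"

definition sample_law :: "nat \<Rightarrow> 'z measure \<Rightarrow> (nat \<Rightarrow> 'z) measure" where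
  "sample_law n D = PiM {..<n} (\<lambda>_. D)"

definition differ_in_one :: "nat \<Rightarrow> (nat \<Rightarrow> 'z) \<Rightarrow> (nat \<Rightarrow> 'z) \<Rightarrow> bool" where
  "differ_in_one n S S' \<longleftrightarrow> card {i\<in>{..<n}. S i \<noteq> S' i} = 1"

definition emp_risk :: "nat \<Rightarrow> ((nat \<Rightarrow> 'z) \<Rightarrow> 'z \<Rightarrow> real) \<Rightarrow> (nat \<Rightarrow> 'z) \<Rightarrow> real" where
  "emp_risk n lstat S = (1 / real n) * (\<Sum>i<n. lstat S (S i))"

definition pop_risk :: "'z measure \<Rightarrow> ((nat \<Rightarrow> 'z) \<Rightarrow> 'z \<Rightarrow> real) \<Rightarrow> (nat \<Rightarrow> 'z) \<Rightarrow> real" where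
  "pop_risk D lstat S = (\<integral>z. lstat S z \<partial>D)"

end

theory Submission
  imports Defs
begin


lemma abs_integral_le_prob:
  fixes h :: "'a \<Rightarrow> real"
  assumes P: "prob_space M" and hm: "h \<in> borel_measurable M"
    and hb: "\<And>x. x \<in> space M \<Longrightarrow> \<bar>h x\<bar> \<le> B"
  shows "\<bar>\<integral>x. h x \<partial>M\<bar> \<le> B"
proof -
  interpret prob_space M by fact
  have int: "integrable M h"
    using hb by (intro integrable_const_bound[where B=B] hm) auto
  have "(\<integral>x. h x \<partial>M) \<le> B"
    using hb by (intro integral_le_const int AE_I2) (auto simp: abs_le_iff)
  moreover have "-B \<le> (\<integral>x. h x \<partial>M)"
    using hb by (intro integral_ge_const int AE_I2) (smt (verit) hb)
  ultimately show ?thesis by auto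
qed


lemma mcdiarmid_mgf:
  fixes M :: "'a measure" and c l B :: real
  assumes P: "prob_space M" and l: "l > 0" and c: "c \<ge> 0"
  shows "\<And>f. f \<in> borel_measurable (PiM {..<k} (\<lambda>_. M)) \<Longrightarrow>
    (\<And>x. x \<in> space (PiM {..<k} (\<lambda>_. M)) \<Longrightarrow> \<bar>f x\<bar> \<le> B) \<Longrightarrow>
    (\<And>x i y. x \<in> space (PiM {..<k} (\<lambda>_. M)) \<Longrightarrow> i < k \<Longrightarrow> y \<in> space M \<Longrightarrow>
        \<bar>f x - f (x(i:=y))\<bar> \<le> c) \<Longrightarrow>
    (\<integral>\<^sup>+x. ennreal (exp (l * (f x - (\<integral>x. f x \<partial>PiM {..<k} (\<lambda>_. M))))) \<partial>PiM {..<k} (\<lambda>_. M))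
      \<le> ennreal (exp (l^2 * real k * c^2 / 8))"
proof (induction k)
  case 0
  interpret Q: prob_space "PiM {..<0::nat} (\<lambda>_. M)"
    by (intro prob_space_PiM P)
  have sp: "space (PiM {..<0::nat} (\<lambda>_. M)) = {\<lambda>_. undefined}"
    by (simp add: space_PiM)
  have "(\<integral>x. f x \<partial>PiM {..<0::nat} (\<lambda>_. M)) = (\<integral>x. f (\<lambda>_. undefined) \<partial>PiM {..<0::nat} (\<lambda>_. M))"
    by (rule Bochner_Integration.integral_cong[OF refl]) (auto simp: space_PiM)
  also have "\<dots> = f (\<lambda>_. undefined)" using Q.prob_space by simp
  finally have E: "(\<integral>x. f x \<partial>PiM {..<0::nat} (\<lambda>_. M)) = f (\<lambda>_. undefined)" .
  have "(\<integral>\<^sup>+x. ennreal (exp (l * (f x - (\<integral>x. f x \<partial>PiM {..<0::nat} (\<lambda>_. M))))) \<partial>PiM {..<0::nat} (\<lambda>_. M))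
     = (\<integral>\<^sup>+x. 1 \<partial>PiM {..<0::nat} (\<lambda>_. M))"
    using E by (intro nn_integral_cong) (auto simp: space_PiM)
  also have "\<dots> = 1" using Q.emeasure_space_1 by (simp del: lessThan_0)
  finally show ?case by simp
next
  case (Suc k)
  let ?P = "PiM {..<k} (\<lambda>_. M)"
  let ?P' = "PiM {..<Suc k} (\<lambda>_. M)"
  interpret M: prob_space M by fact
  interpret PS: product_sigma_finite "\<lambda>_. M" by unfold_locales
  interpret Q: prob_space ?P by (intro prob_space_PiM P)
  interpret Q': prob_space ?P' by (intro prob_space_PiM P)
  have ins: "{..<Suc k} = insert k {..<k}" by auto
  note fm[measurable] = Suc.prems(1)
  have fm': "f \<in> borel_measurable (PiM (insert k {..<k}) (\<lambda>_. M))" using fm by (simp add: ins)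
  have upd_space: "x(k:=y) \<in> space ?P'" if "x \<in> space ?P" "y \<in> space M" for x y
    using that by (auto simp: space_PiM PiE_iff extensional_def)
  have fint: "integrable ?P' f"
    using Suc.prems(2) by (intro Q'.integrable_const_bound[where B=B] fm) auto
  define g where "g x = (\<integral>y. f (x(k:=y)) \<partial>M)" for x
  have Eg: "(\<integral>x. f x \<partial>?P') = (\<integral>x. g x \<partial>?P)"
    unfolding g_def using PS.product_integral_insert[of "{..<k}" k f] fint by (simp add: ins)
  have fupd_m: "(\<lambda>y. f (x(k:=y))) \<in> borel_measurable M" if "x \<in> space ?P" for x
    using measurable_comp[OF measurable_component_update fm', OF that] by (simp add: comp_def fun_upd_def)
  have gm[measurable]: "g \<in> borel_measurable ?P"
    unfolding g_def using fm' by measurable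
  have gb: "\<bar>g x\<bar> \<le> B" if "x \<in> space ?P" for x
    unfolding g_def using that upd_space Suc.prems(2)
    by (intro abs_integral_le_prob P fupd_m) auto
  have gd: "\<bar>g x - g (x(i:=y))\<bar> \<le> c" if x: "x \<in> space ?P" and i: "i < k" and y: "y \<in> space M" for x i y
  proof -
    have x': "x(i:=y) \<in> space ?P" using x i y by (auto simp: space_PiM PiE_iff extensional_def)
    have tw: "\<And>z. (x(k:=z))(i:=y) = (x(i:=y))(k:=z)" using i by (simp add: fun_upd_twist)
    have mm: "(\<lambda>z. f (x(k:=z)) - f ((x(k:=z))(i:=y))) \<in> borel_measurable M"
      unfolding tw using fupd_m[OF x] fupd_m[OF x'] by measurable
    have "g x - g (x(i:=y)) = (\<integral>z. f (x(k:=z)) - f ((x(k:=z))(i:=y)) \<partial>M)"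
      unfolding g_def using i
      by (subst Bochner_Integration.integral_diff)
         (auto intro!: M.integrable_const_bound[where B=B] fupd_m x x' Suc.prems(2) upd_space
               simp: fun_upd_twist)
    also have "\<bar>\<dots>\<bar> \<le> c"
      using x i y upd_space mm
      by (intro abs_integral_le_prob P) (auto intro!: Suc.prems(3))
    finally show ?thesis .
  qed
  have IH: "(\<integral>\<^sup>+x. ennreal (exp (l * (g x - (\<integral>x. g x \<partial>?P)))) \<partial>?P) \<le> ennreal (exp (l^2 * real k * c^2 / 8))"
    by (rule Suc.IH[OF gm gb gd])
  have inner: "(\<integral>\<^sup>+y. ennreal (exp (l * (f (x(k:=y)) - (\<integral>x. g x \<partial>?P)))) \<partial>M)
      \<le> ennreal (exp (l * (g x - (\<integral>x. g x \<partial>?P)))) * ennreal (exp (l^2 * c^2 / 8))"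
    if x: "x \<in> space ?P" for x
  proof -
    define a where "a = Inf ((\<lambda>y. f (x(k:=y))) ` space M)"
    have ne: "space M \<noteq> {}" using M.not_empty .
    have bdd: "bdd_below ((\<lambda>y. f (x(k:=y))) ` space M)"
      using Suc.prems(2)[OF upd_space[OF x]] by (intro bdd_belowI2[where m="-B"]) (smt (verit))
    have lo: "a \<le> f (x(k:=y))" if "y \<in> space M" for y
      unfolding a_def using bdd that by (intro cInf_lower) auto
    have hi: "f (x(k:=y)) \<le> a + c" if y: "y \<in> space M" for y
    proof -
      have "f (x(k:=y)) - c \<le> a"
        unfolding a_def
      proof (intro cInf_greatest)
        fix t assume "t \<in> (\<lambda>y. f (x(k:=y))) ` space M"
        then obtain y' where y': "y' \<in> space M" "t = f (x(k:=y'))" by auto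
        have "\<bar>f (x(k:=y')) - f ((x(k:=y'))(k:=y))\<bar> \<le> c"
          by (intro Suc.prems(3) upd_space x y' y) auto
        then show "f (x(k:=y)) - c \<le> t" using y' by auto
      qed (use ne in auto)
      then show ?thesis by simp
    qed
    interpret IB: interval_bounded_random_variable M "\<lambda>y. f (x(k:=y))" a "a + c"
    proof unfold_locales
      show "(\<lambda>y. f (x(k:=y))) \<in> borel_measurable M" by (rule fupd_m[OF x])
      show "AE y in M. f (x(k:=y)) \<in> {a..a + c}" using lo hi by (intro AE_I2) auto
    qed
    have "(\<integral>\<^sup>+y. ennreal (exp (l * (f (x(k:=y)) - (\<integral>x. g x \<partial>?P)))) \<partial>M)
       = (\<integral>\<^sup>+y. ennreal (exp (l * (g x - (\<integral>x. g x \<partial>?P)))) * ennreal (exp (l * (f (x(k:=y)) - g x))) \<partial>M)"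
      by (intro nn_integral_cong) (simp add: ennreal_mult[symmetric] exp_add[symmetric] algebra_simps)
    also have "\<dots> = ennreal (exp (l * (g x - (\<integral>x. g x \<partial>?P)))) * (\<integral>\<^sup>+y. ennreal (exp (l * (f (x(k:=y)) - g x))) \<partial>M)"
      using fupd_m[OF x] by (intro nn_integral_cmult) measurable
    also have "(\<integral>\<^sup>+y. ennreal (exp (l * (f (x(k:=y)) - g x))) \<partial>M) \<le> ennreal (exp (l^2 * c^2 / 8))"
      using IB.Hoeffdings_lemma_nn_integral[OF l] unfolding g_def by simp
    finally show ?thesis by (simp add: mult_left_mono)
  qed
  have "(\<integral>\<^sup>+x. ennreal (exp (l * (f x - (\<integral>x. f x \<partial>?P')))) \<partial>?P')
      = (\<integral>\<^sup>+x. (\<integral>\<^sup>+y. ennreal (exp (l * (f (x(k:=y)) - (\<integral>x. g x \<partial>?P)))) \<partial>M) \<partial>?P)"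
    unfolding Eg using PS.product_nn_integral_insert[of "{..<k}" k "\<lambda>x. ennreal (exp (l * (f x - (\<integral>x. g x \<partial>?P))))"] fm'
    by (simp add: ins)
  also have "\<dots> \<le> (\<integral>\<^sup>+x. ennreal (exp (l * (g x - (\<integral>x. g x \<partial>?P)))) * ennreal (exp (l^2 * c^2 / 8)) \<partial>?P)"
    by (intro nn_integral_mono inner)
  also have "\<dots> = (\<integral>\<^sup>+x. ennreal (exp (l * (g x - (\<integral>x. g x \<partial>?P)))) \<partial>?P) * ennreal (exp (l^2 * c^2 / 8))"
    by (intro nn_integral_multc) measurable
  also have "\<dots> \<le> ennreal (exp (l^2 * real k * c^2 / 8)) * ennreal (exp (l^2 * c^2 / 8))"
    by (intro mult_right_mono IH) auto
  also have "\<dots> = ennreal (exp (l^2 * real (Suc k) * c^2 / 8))"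
    by (subst ennreal_mult[symmetric]) (auto simp: exp_add[symmetric] algebra_simps add_divide_distrib)
  finally show ?case .
qed

lemma mcdiarmid:
  fixes M :: "'a measure" and c B eps :: real and f :: "(nat \<Rightarrow> 'a) \<Rightarrow> real"
  assumes P: "prob_space M" and c: "c > 0" and k: "k > 0" and eps: "eps \<ge> 0"
    and fm: "f \<in> borel_measurable (PiM {..<k} (\<lambda>_. M))"
    and fb: "\<And>x. x \<in> space (PiM {..<k} (\<lambda>_. M)) \<Longrightarrow> \<bar>f x\<bar> \<le> B"
    and fd: "\<And>x i y. x \<in> space (PiM {..<k} (\<lambda>_. M)) \<Longrightarrow> i < k \<Longrightarrow> y \<in> space M \<Longrightarrow>
        \<bar>f x - f (x(i:=y))\<bar> \<le> c"
  shows "measure (PiM {..<k} (\<lambda>_. M)) {x \<in> space (PiM {..<k} (\<lambda>_. M)).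
            (\<integral>x. f x \<partial>PiM {..<k} (\<lambda>_. M)) + eps \<le> f x}
         \<le> exp (-2 * eps^2 / (real k * c^2))"
proof (cases "eps = 0")
  case True
  interpret Q: prob_space "PiM {..<k} (\<lambda>_. M)" by (intro prob_space_PiM P)
  show ?thesis using True by simp
next
  case False
  let ?P = "PiM {..<k} (\<lambda>_. M)"
  interpret Q: prob_space ?P by (intro prob_space_PiM P)
  define E where "E = (\<integral>x. f x \<partial>?P)"
  define l where "l = 4 * eps / (real k * c^2)"
  have epos: "eps > 0" using eps False by simp
  have l: "l > 0" unfolding l_def using epos c k by auto
  have mgf: "(\<integral>\<^sup>+x. ennreal (exp (l * (f x - E))) \<partial>?P) \<le> ennreal (exp (l^2 * real k * c^2 / 8))"
    unfolding E_def using mcdiarmid_mgf[OF P l less_imp_le[OF c] fm fb fd] by blast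
  have "emeasure ?P {x \<in> space ?P. eps \<le> f x - E}
     \<le> ennreal (exp (-l * eps)) * (\<integral>\<^sup>+x. ennreal (exp (l * (f x - E))) * indicator (space ?P) x \<partial>?P)"
    using fm by (intro Chernoff_ineq_nn_integral_ge l) auto
  also have "(\<integral>\<^sup>+x. ennreal (exp (l * (f x - E))) * indicator (space ?P) x \<partial>?P)
      = (\<integral>\<^sup>+x. ennreal (exp (l * (f x - E))) \<partial>?P)"
    by (intro nn_integral_cong) auto
  also have "ennreal (exp (-l * eps)) * \<dots> \<le> ennreal (exp (-l * eps)) * ennreal (exp (l^2 * real k * c^2 / 8))"
    by (intro mult_left_mono mgf) auto
  also have "\<dots> = ennreal (exp (-l * eps + l^2 * real k * c^2 / 8))"
    by (subst ennreal_mult[symmetric]) (auto simp: exp_add[symmetric])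
  also have "-l * eps + l^2 * real k * c^2 / 8 = -2 * eps^2 / (real k * c^2)"
    unfolding l_def using c k by (simp add: field_simps power2_eq_square)
  finally have *: "emeasure ?P {x \<in> space ?P. eps \<le> f x - E} \<le> ennreal (exp (-2 * eps^2 / (real k * c^2)))" .
  have "{x \<in> space ?P. E + eps \<le> f x} = {x \<in> space ?P. eps \<le> f x - E}" by auto
  then show ?thesis using * unfolding E_def
    by (simp add: Q.emeasure_eq_measure)
qed



lemma AE_lborel_ex:
  assumes "AE x in (lborel :: 'a::euclidean_space measure). P x" shows "\<exists>x. P x"
proof (rule ccontr)
  assume nt: "\<not> (\<exists>x. P x)"
  from assms obtain N where N: "{x\<in>space lborel. \<not> P x} \<subseteq> N" "emeasure lborel N = 0" "N \<in> sets lborel"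
    by (rule AE_E)
  have "emeasure lborel (UNIV :: 'a set) \<le> emeasure lborel N"
    using N nt by (intro emeasure_mono) auto
  then show False using N by simp
qed

lemma (in prob_space) AE_ex:
  assumes "AE x in M. P x" shows "\<exists>x. P x"
proof (rule ccontr)
  assume nt: "\<not> (\<exists>x. P x)"
  from assms have "AE x in M. False" by (rule eventually_mono) (use nt in blast)
  then show False by simp
qed

theorem theorem1:
  fixes D :: "((real ^ 'd::finite) \<times> real) measure"
    and loss :: "(real ^ 'd) \<times> real \<Rightarrow> 'w::euclidean_space \<Rightarrow> real"
    and grad :: "(real ^ 'd) \<times> real \<Rightarrow> 'w \<Rightarrow> 'w"
    and lstat :: "(nat \<Rightarrow> (real ^ 'd) \<times> real) \<Rightarrow> (real ^ 'd) \<times> real \<Rightarrow> real"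
    and n m :: nat and eta beta L delta :: real
  assumes D: "prob_space D" "sets D = sets borel"
    and nm: "1 \<le> n" "1 \<le> m" "m \<le> n"
    and eta: "eta > 0"
    and loss_nonneg: "\<And>z w. loss z w \<ge> 0"
    and loss_bdd: "bdd_above (range (\<lambda>(z, w). \<bar>loss z w\<bar>))"
    and L_def: "L = (SUP (z, w). \<bar>loss z w\<bar>)"
    and grad: "\<And>z w. GDERIV (loss z) w :> grad z w"
    and ergodic: "\<And>S. AE w0 in lborel. AE xi in batch_law n m. \<forall>z.
           (\<lambda>T. (\<Sum>t<T. loss z (sgd_orbit grad eta m S xi w0 t)) / real T)
             \<longlonglongrightarrow> lstat S z"
    and lstat_meas: "(\<lambda>(S, z). lstat S z) \<in> borel_measurable (sample_law n D \<Otimes>\<^sub>M D)"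
    and SAS: "\<And>S S'. S \<in> space (sample_law n D) \<Longrightarrow> S' \<in> space (sample_law n D) \<Longrightarrow>
           differ_in_one n S S' \<Longrightarrow> beta = (SUP z. \<bar>lstat S z - lstat S' z\<bar>)"
    and delta: "0 < delta" "delta < 1"
  shows "measure (sample_law n D)
           {S \<in> space (sample_law n D).
              pop_risk D lstat S \<le> emp_risk n lstat S + beta
                + 2 * (real n * beta + L) * sqrt (ln (2 / delta) / (2 * real n))}
         > 1 - delta"
proof -
  let ?P = "sample_law n D"
  interpret D: prob_space D by (rule D(1))
  interpret PS: product_sigma_finite "\<lambda>_. D" by unfold_locales
  interpret P: prob_space ?P unfolding sample_law_def by (intro prob_space_PiM D(1))
  note lstat_meas[measurable]
  have spD: "space D = UNIV" using sets_eq_imp_space_eq[OF D(2)] by simp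
  have spP: "space ?P = PiE {..<n} (\<lambda>_. UNIV)" by (simp add: sample_law_def space_PiM spD)
  have Lb: "\<bar>loss z w\<bar> \<le> L" for z w
    unfolding L_def using cSUP_upper[OF _ loss_bdd, of "(z, w)"] by simp
  have L0: "0 \<le> L" using Lb[of undefined undefined] by simp
  have lstat_bd: "0 \<le> lstat S z \<and> lstat S z \<le> L" for S z
  proof -
    interpret B: prob_space "batch_law n m" unfolding batch_law_def
      by (intro prob_space_PiM prob_space_measure_pmf)
    obtain w0 where w0: "AE xi in batch_law n m. \<forall>z.
           (\<lambda>T. (\<Sum>t<T. loss z (sgd_orbit grad eta m S xi w0 t)) / real T)
             \<longlonglongrightarrow> lstat S z"
      using AE_lborel_ex[OF ergodic[of S]] by blast
    obtain xi where xi: "\<forall>z.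
           (\<lambda>T. (\<Sum>t<T. loss z (sgd_orbit grad eta m S xi w0 t)) / real T)
             \<longlonglongrightarrow> lstat S z"
      using B.AE_ex[OF w0] by blast
    have lim: "(\<lambda>T. (\<Sum>t<T. loss z (sgd_orbit grad eta m S xi w0 t)) / real T) \<longlonglongrightarrow> lstat S z"
      using xi by blast
    have bnd: "0 \<le> (\<Sum>t<T. loss z (sgd_orbit grad eta m S xi w0 t)) / real T \<and>
               (\<Sum>t<T. loss z (sgd_orbit grad eta m S xi w0 t)) / real T \<le> L" for T
    proof (cases "T = 0")
      case True then show ?thesis using L0 by simp
    next
      case False
      have "(\<Sum>t<T. loss z (sgd_orbit grad eta m S xi w0 t)) \<le> real (card {..<T}) * L"
        using Lb by (intro sum_bounded_above) (smt (verit))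
      then have "(\<Sum>t<T. loss z (sgd_orbit grad eta m S xi w0 t)) \<le> real T * L" by simp
      moreover have "0 \<le> (\<Sum>t<T. loss z (sgd_orbit grad eta m S xi w0 t))"
        by (intro sum_nonneg loss_nonneg)
      ultimately show ?thesis using False
        by (auto simp: divide_simps mult.commute)
    qed
    show ?thesis
      using LIMSEQ_le_const[OF lim, of 0] LIMSEQ_le_const2[OF lim, of L] bnd by blast
  qed
  have sas_le: "\<bar>lstat S z - lstat S' z\<bar> \<le> beta"
    if "S \<in> space ?P" "S' \<in> space ?P" "differ_in_one n S S'" for S S' z
  proof -
    have "bdd_above (range (\<lambda>z. \<bar>lstat S z - lstat S' z\<bar>))"
      using lstat_bd by (intro bdd_aboveI2[where M=L]) (smt (verit))
    then show ?thesis using SAS[OF that] cSUP_upper[of z UNIV "\<lambda>z. \<bar>lstat S z - lstat S' z\<bar>"] by simp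
  qed
  have beta0: "0 \<le> beta"
  proof -
    define S0 :: "nat \<Rightarrow> (real ^ 'd) \<times> real" where "S0 = (\<lambda>j\<in>{..<n}. 0)"
    define S1 where "S1 = S0(0 := (0, 1))"
    have "S0 \<in> space ?P" "S1 \<in> space ?P" using nm(1) by (auto simp: spP S0_def S1_def PiE_iff extensional_def)
    moreover have "differ_in_one n S0 S1"
    proof -
      have "{j\<in>{..<n}. S0 j \<noteq> S1 j} = {0}" using nm(1) by (auto simp: S0_def S1_def zero_prod_def)
      then show ?thesis by (simp add: differ_in_one_def)
    qed
    ultimately show ?thesis using sas_le[of S0 S1 0] by simp
  qed
  have beta_bd: "\<bar>lstat S z - lstat (S(i:=y)) z\<bar> \<le> beta" if S: "S \<in> space ?P" and i: "i < n" for S i y z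
  proof (cases "y = S i")
    case True then show ?thesis using beta0 by simp
  next
    case False
    have "S(i:=y) \<in> space ?P" using S i by (auto simp: spP PiE_iff extensional_def)
    moreover have "differ_in_one n S (S(i:=y))"
    proof -
      have "{j\<in>{..<n}. S j \<noteq> (S(i:=y)) j} = {i}" using i False by auto
      then show ?thesis by (simp add: differ_in_one_def)
    qed
    ultimately show ?thesis using sas_le S by blast
  qed
  have lm_D: "(\<lambda>z. lstat S z) \<in> borel_measurable D" if "S \<in> space ?P" for S
    using measurable_Pair2[OF lstat_meas that] by simp
  have lint_D: "integrable D (\<lambda>z. lstat S z)" if "S \<in> space ?P" for S
    using lstat_bd by (intro D.integrable_const_bound[where B=L] lm_D that AE_I2) (simp add: lstat_bd abs_of_nonneg)
  have pop_m[measurable]: "(\<lambda>S. pop_risk D lstat S) \<in> borel_measurable ?P"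
    unfolding pop_risk_def using D.borel_measurable_lebesgue_integral[of "\<lambda>S z. lstat S z" ?P] lstat_meas by simp
  have li_m: "(\<lambda>S. lstat S (S i)) \<in> borel_measurable ?P" if i: "i < n" for i
  proof -
    have "(\<lambda>S. (S, S i)) \<in> measurable ?P (?P \<Otimes>\<^sub>M D)"
      unfolding sample_law_def
      by (intro measurable_Pair measurable_ident_sets refl measurable_component_singleton) (use i in simp)
    from measurable_compose[OF this lstat_meas] show ?thesis by simp
  qed
  have emp_m[measurable]: "(\<lambda>S. emp_risk n lstat S) \<in> borel_measurable ?P"
    unfolding emp_risk_def by (intro borel_measurable_times borel_measurable_const borel_measurable_sum li_m) simp
  have pop_bd: "0 \<le> pop_risk D lstat S \<and> pop_risk D lstat S \<le> L" if "S \<in> space ?P" for S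
    unfolding pop_risk_def using lstat_bd
    by (intro conjI integral_nonneg_AE D.integral_le_const lint_D that AE_I2) auto
  have emp_bd: "0 \<le> emp_risk n lstat S \<and> emp_risk n lstat S \<le> L" for S
  proof -
    have "(\<Sum>i<n. lstat S (S i)) \<le> real (card {..<n}) * L"
      using lstat_bd by (intro sum_bounded_above) auto
    moreover have "0 \<le> (\<Sum>i<n. lstat S (S i))" using lstat_bd by (intro sum_nonneg) auto
    ultimately show ?thesis using nm(1) unfolding emp_risk_def by (auto simp: field_simps)
  qed
  define Phi where "Phi S = pop_risk D lstat S - emp_risk n lstat S" for S
  have Phi_m: "Phi \<in> borel_measurable ?P" unfolding Phi_def by measurable
  have Phi_b: "\<bar>Phi S\<bar> \<le> L" if "S \<in> space ?P" for S
    unfolding Phi_def using pop_bd[OF that] emp_bd[of S] by auto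
  have Phi_d: "\<bar>Phi S - Phi (S(i:=y))\<bar> \<le> 2 * beta + L / real n"
    if S: "S \<in> space ?P" and i: "i < n" for S i y
  proof -
    have S': "S(i:=y) \<in> space ?P" using S i by (auto simp: spP PiE_iff extensional_def)
    have "pop_risk D lstat S - pop_risk D lstat (S(i:=y)) = (\<integral>z. lstat S z - lstat (S(i:=y)) z \<partial>D)"
      unfolding pop_risk_def by (rule Bochner_Integration.integral_diff[symmetric]) (intro lint_D S S')+
    also have "\<bar>\<dots>\<bar> \<le> beta"
      using beta_bd[OF S i] lm_D[OF S] lm_D[OF S'] by (intro abs_integral_le_prob D(1)) auto
    finally have p: "\<bar>pop_risk D lstat S - pop_risk D lstat (S(i:=y))\<bar> \<le> beta" .
    have tm: "\<bar>lstat S (S j) - lstat (S(i:=y)) ((S(i:=y)) j)\<bar> \<le> beta + (if j = i then L else 0)" for j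
    proof (cases "j = i")
      case True then show ?thesis using lstat_bd[of S "S j"] lstat_bd[of "S(i:=y)" y] beta0 by auto
    next
      case False
      have "\<bar>lstat S (S j) - lstat (S(i:=y)) (S j)\<bar> \<le> beta" by (rule beta_bd[OF S i])
      then show ?thesis using False by simp
    qed
    have "\<bar>(\<Sum>j<n. lstat S (S j)) - (\<Sum>j<n. lstat (S(i:=y)) ((S(i:=y)) j))\<bar>
        = \<bar>\<Sum>j<n. lstat S (S j) - lstat (S(i:=y)) ((S(i:=y)) j)\<bar>"
      by (simp add: sum_subtractf)
    also have "\<dots> \<le> (\<Sum>j<n. \<bar>lstat S (S j) - lstat (S(i:=y)) ((S(i:=y)) j)\<bar>)" by (rule sum_abs)
    also have "\<dots> \<le> (\<Sum>j<n. beta + (if j = i then L else 0))" by (intro sum_mono tm)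
    also have "\<dots> = real n * beta + L" using i by (simp add: sum.distrib)
    finally have "\<bar>(\<Sum>j<n. lstat S (S j)) - (\<Sum>j<n. lstat (S(i:=y)) ((S(i:=y)) j))\<bar> \<le> real n * beta + L" .
    then have "\<bar>emp_risk n lstat S - emp_risk n lstat (S(i:=y))\<bar> \<le> (real n * beta + L) / real n"
      using nm(1) unfolding emp_risk_def
      by (simp add: right_diff_distrib[symmetric] abs_mult divide_simps del: fun_upd_apply)
    also have "\<dots> = beta + L / real n" using nm(1) by (simp add: field_simps)
    finally show ?thesis using p unfolding Phi_def by linarith
  qed
  have li_int: "integrable ?P (\<lambda>S. lstat S (S i))" if i: "i < n" for i
    using lstat_bd by (intro P.integrable_const_bound[where B=L] li_m i AE_I2) (simp add: abs_of_nonneg)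
  have pop_int: "integrable ?P (\<lambda>S. pop_risk D lstat S)"
    using pop_bd by (intro P.integrable_const_bound[where B=L] pop_m AE_I2) (simp add: abs_of_nonneg)
  have Epop: "(\<integral>S. pop_risk D lstat S \<partial>?P) \<le> (\<integral>S. lstat S (S i) \<partial>?P) + beta" if i: "i < n" for i
  proof -
    define I where "I = {..<n} - {i}"
    have insI: "insert i I = {..<n}" using i by (auto simp: I_def)
    have PI: "?P = PiM (insert i I) (\<lambda>_. D)" by (simp add: insI sample_law_def)
    have fin: "finite I" "i \<notin> I" by (auto simp: I_def)
    have upd: "x(i:=y) \<in> space ?P" if "x \<in> space (PiM I (\<lambda>_. D))" for x y
      using that i by (auto simp: spP space_PiM PiE_iff extensional_def I_def)
    have lm': "(\<lambda>p. ennreal ((\<lambda>(S, z). lstat S z) p)) \<in> borel_measurable (?P \<Otimes>\<^sub>M D)"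
      by measurable
    have lm'': "case_prod (\<lambda>S z. ennreal (lstat S z)) \<in> borel_measurable (PiM (insert i I) (\<lambda>_. D) \<Otimes>\<^sub>M D)"
      using lm' unfolding PI by (simp add: case_prod_beta')
    have intli: "integrable ?P (\<lambda>S. lstat S (S i) + beta)"
      by (intro Bochner_Integration.integrable_add li_int i) simp
    have "ennreal (\<integral>S. pop_risk D lstat S \<partial>?P) = (\<integral>\<^sup>+S. ennreal (pop_risk D lstat S) \<partial>?P)"
      by (rule nn_integral_eq_integral[symmetric]) (use pop_int pop_bd in auto)
    also have "\<dots> = (\<integral>\<^sup>+S. (\<integral>\<^sup>+z. ennreal (lstat S z) \<partial>D) \<partial>?P)"
      unfolding pop_risk_def
      by (intro nn_integral_cong nn_integral_eq_integral[symmetric] lint_D) (auto simp: lstat_bd)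
    also have "\<dots> = (\<integral>\<^sup>+x. (\<integral>\<^sup>+y. (\<integral>\<^sup>+z. ennreal (lstat (x(i:=y)) z) \<partial>D) \<partial>D) \<partial>PiM I (\<lambda>_. D))"
      unfolding PI
      by (rule PS.product_nn_integral_insert[OF fin]) (rule D.borel_measurable_nn_integral[OF lm''])
    also have "\<dots> \<le> (\<integral>\<^sup>+x. (\<integral>\<^sup>+z. ennreal (lstat (x(i:=z)) z + beta) \<partial>D) \<partial>PiM I (\<lambda>_. D))"
    proof (rule nn_integral_mono)
      fix x assume x: "x \<in> space (PiM I (\<lambda>_. D))"
      have "(\<integral>\<^sup>+y. (\<integral>\<^sup>+z. ennreal (lstat (x(i:=y)) z) \<partial>D) \<partial>D)
          \<le> (\<integral>\<^sup>+y. (\<integral>\<^sup>+z. ennreal (lstat (x(i:=z)) z + beta) \<partial>D) \<partial>D)"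
      proof (intro nn_integral_mono ennreal_leI)
        fix y z
        have "\<bar>lstat (x(i:=y)) z - lstat ((x(i:=y))(i:=z)) z\<bar> \<le> beta" by (rule beta_bd[OF upd[OF x] i])
        then show "lstat (x(i:=y)) z \<le> lstat (x(i:=z)) z + beta" by (simp add: abs_le_iff)
      qed
      also have "\<dots> = (\<integral>\<^sup>+z. ennreal (lstat (x(i:=z)) z + beta) \<partial>D)"
        by (simp add: D.emeasure_space_1)
      finally show "(\<integral>\<^sup>+y. (\<integral>\<^sup>+z. ennreal (lstat (x(i:=y)) z) \<partial>D) \<partial>D)
          \<le> (\<integral>\<^sup>+z. ennreal (lstat (x(i:=z)) z + beta) \<partial>D)" .
    qed
    also have "\<dots> = (\<integral>\<^sup>+S. ennreal (lstat S (S i) + beta) \<partial>?P)"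
    proof -
      have m: "(\<lambda>S. ennreal (lstat S (S i) + beta)) \<in> borel_measurable (PiM (insert i I) (\<lambda>_. D))"
        using li_m[OF i] unfolding PI by measurable
      show ?thesis
        unfolding PI using PS.product_nn_integral_insert[OF fin m] by simp
    qed
    also have "\<dots> = ennreal (\<integral>S. lstat S (S i) + beta \<partial>?P)"
      by (rule nn_integral_eq_integral[OF intli]) (use lstat_bd beta0 in auto)
    also have "(\<integral>S. lstat S (S i) + beta \<partial>?P) = (\<integral>S. lstat S (S i) \<partial>?P) + beta"
      using li_int[OF i] by (simp add: P.prob_space)
    finally show ?thesis
      using lstat_bd beta0 by (subst (asm) ennreal_le_iff) (auto intro!: add_nonneg_nonneg integral_nonneg_AE)
  qed
  have emp_int_eq: "(\<integral>S. emp_risk n lstat S \<partial>?P) = (1 / real n) * (\<Sum>i<n. \<integral>S. lstat S (S i) \<partial>?P)"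
    unfolding emp_risk_def using li_int by (simp add: Bochner_Integration.integral_sum)
  have emp_int: "integrable ?P (\<lambda>S. emp_risk n lstat S)"
    using emp_bd by (intro P.integrable_const_bound[where B=L] emp_m AE_I2) (simp add: abs_of_nonneg)
  have EPhi: "(\<integral>S. Phi S \<partial>?P) \<le> beta"
  proof -
    have "(\<integral>S. Phi S \<partial>?P) = (\<integral>S. pop_risk D lstat S \<partial>?P) - (\<integral>S. emp_risk n lstat S \<partial>?P)"
      unfolding Phi_def by (rule Bochner_Integration.integral_diff[OF pop_int emp_int])
    also have "(\<integral>S. pop_risk D lstat S \<partial>?P) = (1 / real n) * (\<Sum>i<n. (\<integral>S. pop_risk D lstat S \<partial>?P))"
      using nm(1) by simp
    also have "\<dots> \<le> (1 / real n) * (\<Sum>i<n. (\<integral>S. lstat S (S i) \<partial>?P) + beta)"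
      by (intro mult_left_mono sum_mono Epop) auto
    also have "\<dots> = (\<integral>S. emp_risk n lstat S \<partial>?P) + beta"
      unfolding emp_int_eq using nm(1) by (simp add: sum.distrib field_simps)
    finally show ?thesis by simp
  qed
  have ln0: "0 < ln (2 / delta)" using delta by simp
  define s where "s = sqrt (ln (2 / delta) / (2 * real n))"
  have s0: "0 \<le> s" unfolding s_def using ln0 by simp
  define eps where "eps = 2 * (real n * beta + L) * s"
  have eps0: "0 \<le> eps" unfolding eps_def using s0 beta0 L0 by simp
  define G where "G = {S \<in> space ?P. pop_risk D lstat S \<le> emp_risk n lstat S + beta + eps}"
  have G_sets: "G \<in> sets ?P" unfolding G_def by measurable
  have goal_eq: "{S \<in> space ?P. pop_risk D lstat S \<le> emp_risk n lstat S + beta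
                + 2 * (real n * beta + L) * sqrt (ln (2 / delta) / (2 * real n))} = G"
    unfolding G_def eps_def s_def ..
  show ?thesis
  proof (cases "L = 0")
    case True
    have "G = space ?P"
    proof (unfold G_def, intro subset_antisym subsetI)
      fix S assume S: "S \<in> space ?P"
      show "S \<in> {S \<in> space ?P. pop_risk D lstat S \<le> emp_risk n lstat S + beta + eps}"
        using pop_bd[OF S] emp_bd[of S] True beta0 eps0 S by auto
    qed auto
    then show ?thesis unfolding goal_eq using delta by (simp add: P.prob_space)
  next
    case False
    with L0 have Lpos: "L > 0" by simp
    define c where "c = 2 * beta + L / real n"
    have c: "c > 0" unfolding c_def using Lpos beta0 nm(1) by (simp add: add_nonneg_pos)
    define Bad where "Bad = {S \<in> space ?P. (\<integral>S. Phi S \<partial>?P) + eps \<le> Phi S}"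
    have "measure ?P Bad \<le> exp (-2 * eps^2 / (real n * c^2))"
      unfolding Bad_def sample_law_def
      using mcdiarmid[OF D(1) c _ eps0, where f=Phi and B=L and k=n] Phi_m Phi_b Phi_d nm(1) spD
      unfolding sample_law_def c_def by auto
    also have "\<dots> \<le> exp (- ln (2 / delta))"
    proof -
      have nc: "real n * c^2 = (2 * real n * beta + L)^2 / real n"
        unfolding c_def using nm(1) by (simp add: field_simps power2_eq_square)
      have s2: "s^2 = ln (2 / delta) / (2 * real n)" unfolding s_def using ln0 by simp
      have "2 * eps^2 / (real n * c^2) = 4 * (real n * beta + L)^2 * ln (2 / delta) / (2 * real n * beta + L)^2"
      proof -
        have e2: "eps^2 = 4 * (real n * beta + L)^2 * (ln (2 / delta) / (2 * real n))"
          unfolding eps_def using nm(1) by (simp add: power_mult_distrib s2) (simp add: power2_eq_square field_simps)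
        have "0 \<le> 2 * real n * beta" using beta0 by simp
        then have nz: "(2 * real n * beta + L) \<noteq> 0" using Lpos by linarith
        show ?thesis unfolding nc e2 using nm(1) nz by (simp add: field_simps)
      qed
      also have "\<dots> \<ge> ln (2 / delta)"
      proof -
        have "0 \<le> 2 * real n * beta" using beta0 by simp
        then have "2 * real n * beta + L \<noteq> 0" using Lpos by linarith
        then have pos: "0 < (2 * real n * beta + L)^2" by simp
        have "(2 * real n * beta + L)^2 \<le> (2 * (real n * beta + L))^2"
          using Lpos beta0 by (intro power_mono) auto
        also have "(2 * (real n * beta + L))^2 = 4 * (real n * beta + L)^2" by (simp add: power2_eq_square algebra_simps)
        finally have "(2 * real n * beta + L)^2 * ln (2 / delta) \<le> 4 * (real n * beta + L)^2 * ln (2 / delta)"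
          using ln0 by (intro mult_right_mono) auto
        then show ?thesis using pos by (simp add: divide_simps mult.commute)
      qed
      finally show ?thesis by simp
    qed
    also have "\<dots> = delta / 2" using delta by (simp add: exp_minus)
    finally have bad: "measure ?P Bad \<le> delta / 2" .
    have Bad_sets: "Bad \<in> sets ?P" unfolding Bad_def using Phi_m by measurable
    have "space ?P - G \<subseteq> Bad"
      unfolding G_def Bad_def Phi_def using EPhi unfolding Phi_def by auto
    then have "measure ?P (space ?P - G) \<le> measure ?P Bad"
      using Bad_sets by (intro P.finite_measure_mono) auto
    moreover have "measure ?P (space ?P - G) = 1 - measure ?P G" by (rule P.prob_compl[OF G_sets])
    ultimately show ?thesis unfolding goal_eq using bad delta by linarith
  qed
qed

end
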